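(* Let $\tau_i\in\tau_H$ be a HI-task in the multi-rate fluid model, let $k_i$ be its earliest completion window, and let $R_i=\theta_{i,k_i}^H$ if $k_i\le n_H$ and $R_i=\theta_i^H$ if $k_i=n_H+1$. If $$\sum_{j:1\le j<k_i}\theta_{i,j}^H w_j + R_i\Big(T_i - C_i^L/\theta_i^L - \sum_{j:1\le j<k_i} w_j\Big)\ \ge\ C_i^H-C_i^L,$$ $$\forall j:\ k_i\le j\le n_H,\quad \theta_i^L\le\theta_{i,j}^H,\qquad\text{and}\qquad \theta_i^L\le\theta_i^H,$$ then every carry-over job of $\tau_i$ meets its deadline in the HI-mode (i.e., receives a total of $C_i^H$ units of execution by its deadline).
   Context: A dual-criticality implicit-deadline sporadic task system $\tau$ runs on $m$ identical processors. Each task $\tau_i=(T_i,\chi_i,C_i^L,C_i^H)$ has period and relative deadline $T_i>0$, criticality $\chi_i\in\{LO,HI\}$, and WCETs $C_i^L\le C_i^H$ ($C_i^L=C_i^H$ for LO-tasks); $u_i^L=C_i^L/T_i\le1$, $u_i^H=C_i^H/T_i\le1$. $\tau_H$ is the set of HI-tasks and $n_H=|\tau_H|$. The system starts in LO-mode; the mode switch occurs at the first instant a job of some HI-task $\tau_i$ has executed $C_i^L$ units without completing; from then on the system is in HI-mode, all LO-task jobs are discarded, and every HI-task job must receive $C_i^H$ units by its deadline. No HI-job needs more than $C_i^H$ units. Multi-rate fluid model (executing at rate $\theta$ means receiving $\theta\ell$ units of execution in any interval of length $\ell$): in LO-mode every job of $\tau_i$ executes at rate $\theta_i^L\in(0,1]$;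 measuring time from the mode switch, the transition period $[0,\sum_{j=1}^{n_H}w_j)$ is divided into consecutive windows of fixed durations $w_1,\dots,w_{n_H}\ge0$, window $j$ being $[\sum_{l<j}w_l,\sum_{l\le j}w_l)$, during which each job of HI-task $\tau_i$ executes at rate $\theta_{i,j}^H\in[0,1]$; after the transition period it executes at rate $\theta_i^H\in(0,1]$. A carry-over job of $\tau_i$ is a job released before the mode switch that has not completed at the mode switch. The earliest completion window of $\tau_i$ is the largest index $k_i\in\{1,\dots,n_H+1\}$ such that $\sum_{j:1\le j<k_i}w_j<T_i-C_i^L/\theta_i^L$ (so that, if $k_i\le n_H$, $\sum_{j:1\le j\le k_i}w_j\ge T_i-C_i^L/\theta_i^L$). *)

theory Defs
  imports Complex_Main
begin

text \<open>Time is measured from the mode switch (time 0). The transition period consists of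
windows 1..nH with durations w 1, ..., w nH; window j is
[win_start w j, win_start w (j+1)).\<close>

definition win_start :: "(nat \<Rightarrow> real) \<Rightarrow> nat \<Rightarrow> real" where
  "win_start w j = (\<Sum>l\<in>{1..<j}. w l)"

definition hi_exec :: "nat \<Rightarrow> (nat \<Rightarrow> real) \<Rightarrow> (nat \<Rightarrow> real) \<Rightarrow> real \<Rightarrow> real \<Rightarrow> real" where
  "hi_exec nH w thH thHf t =
     (\<Sum>j\<in>{1..nH}. thH j * max 0 (min (win_start w (j + 1)) t - win_start w j))
     + thHf * max 0 (t - win_start w (nH + 1))"

definition earliest_completion_window ::
  "nat \<Rightarrow> (nat \<Rightarrow> real) \<Rightarrow> real \<Rightarrow> real \<Rightarrow> real \<Rightarrow> nat" where
  "earliest_completion_window nH w T CL thL =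
     (GREATEST k. k \<in> {1..nH + 1} \<and> win_start w k < T - CL / thL)"

end

theory Submission
  imports Defs
begin

lemma ws_Suc: "1 \<le> j \<Longrightarrow> win_start w (j + 1) = win_start w j + w j"
  unfolding win_start_def by (simp add: atLeastLessThanSuc add.commute)

lemma ws_mono:
  assumes "\<And>j. j \<in> {1..n} \<Longrightarrow> 0 \<le> w j" "i \<le> j" "j \<le> n + 1"
  shows "win_start w i \<le> win_start w j"
  unfolding win_start_def
  by (rule sum_mono2) (use assms in auto)

lemma ws_nonneg:
  assumes "\<And>j. j \<in> {1..n} \<Longrightarrow> 0 \<le> w j" "j \<le> n + 1"
  shows "0 \<le> win_start w j"
  unfolding win_start_def by (rule sum_nonneg) (use assms in auto)

lemma partition_sum:
  assumes "\<And>j. j \<in> {1..n} \<Longrightarrow> 0 \<le> w j" "m \<le> n" "0 \<le> t"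
  shows "(\<Sum>j\<in>{1..m}. max 0 (min (win_start w (j + 1)) t - win_start w j))
         = min t (win_start w (m + 1))"
  using assms(2)
proof (induction m)
  case 0
  then show ?case using assms(3) by (simp add: win_start_def)
next
  case (Suc m)
  have "win_start w (m+1) \<le> win_start w (Suc m + 1)"
    using ws_mono[OF assms(1)] Suc.prems by simp
  then show ?case using Suc by (simp add: max_def min_def)
qed

theorem theorem1:
  fixes nH :: nat and T CL CH thL thHf :: real
    and w thH :: "nat \<Rightarrow> real" and k :: nat and r :: real
  assumes nH: "nH \<ge> 1"
    and T: "T > 0"
    and C: "0 \<le> CL" "CL \<le> CH" "CL / T \<le> 1" "CH / T \<le> 1"
    and thL: "0 < thL" "thL \<le> 1"
    and thH: "\<And>j. j \<in> {1..nH} \<Longrightarrow> 0 \<le> thH j \<and> thH j \<le> 1"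
    and thHf: "0 < thHf" "thHf \<le> 1"
    and w: "\<And>j. j \<in> {1..nH} \<Longrightarrow> 0 \<le> w j"
    and ecw_exists: "\<exists>k'. k' \<in> {1..nH + 1} \<and> win_start w k' < T - CL / thL"
    and k_def: "k = earliest_completion_window nH w T CL thL"
    and cond1: "(\<Sum>j\<in>{1..<k}. thH j * w j)
                 + (if k \<le> nH then thH k else thHf) * (T - CL / thL - win_start w k)
                 \<ge> CH - CL"
    and cond2: "\<And>j. k \<le> j \<Longrightarrow> j \<le> nH \<Longrightarrow> thL \<le> thH j"
    and cond3: "thL \<le> thHf"
    \<comment> \<open>a carry-over job: released at time r before the mode switch (time 0), executed at
        rate thL during [r, 0), and (since the switch happens no later than the first instant
        a HI-job has executed CL units) it has executed at most CL units at the switch\<close>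
    and rel: "r < 0"
    and lo_exec: "thL * (0 - r) \<le> CL"
  shows "thL * (0 - r) + hi_exec nH w thH thHf (r + T) \<ge> CH"
proof -
  define D0 where "D0 = T - CL / thL"
  define D where "D = r + T"
  define ws where "ws = win_start w"
  define m where "m = (\<lambda>j t. max 0 (min (ws (j + 1)) t - ws j))"
  define mf where "mf = (\<lambda>t. max 0 (t - ws (nH + 1)))"
  have f_def: "\<And>t. hi_exec nH w thH thHf t = (\<Sum>j\<in>{1..nH}. thH j * m j t) + thHf * mf t"
    unfolding hi_exec_def m_def mf_def ws_def by simp
  let ?P = "\<lambda>k. k \<in> {1..nH + 1} \<and> win_start w k < T - CL / thL"
  obtain k' where k': "?P k'" using ecw_exists by blast
  have bnd: "\<And>y. ?P y \<Longrightarrow> y \<le> nH + 1" by auto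
  have Pk: "?P k" unfolding k_def earliest_completion_window_def
    by (rule GreatestI_nat[where P="?P", OF k' bnd])
  have notP: "\<not> ?P y" if "k < y" for y
  proof
    assume "?P y"
    then have "y \<le> k" unfolding k_def earliest_completion_window_def
      by (rule Greatest_le_nat[where P="?P", OF _ bnd])
    with that show False by simp
  qed
  have k1: "1 \<le> k" "k \<le> nH + 1" and wsk: "ws k < D0"
    using Pk by (auto simp: ws_def D0_def)
  have mono: "\<And>i j. i \<le> j \<Longrightarrow> j \<le> nH + 1 \<Longrightarrow> ws i \<le> ws j"
    unfolding ws_def using ws_mono[of nH w] w by blast
  have ws1: "ws 1 = 0" by (simp add: ws_def win_start_def)
  have wsS: "\<And>j. 1 \<le> j \<Longrightarrow> ws (j+1) = ws j + w j" unfolding ws_def by (rule ws_Suc)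
  have D0pos: "0 \<le> D0" using mono[of 1 k] k1 wsk ws1 by simp
  have DD0: "D0 \<le> D" using lo_exec thL unfolding D_def D0_def
    by (simp add: field_simps)
  have gap: "thL * (D - D0) = CL - thL * (0 - r)" using thL unfolding D_def D0_def
    by (simp add: field_simps)
  have above: "D0 \<le> ws (k+1)" if "k \<le> nH"
    using notP[of "k+1"] that by (auto simp: ws_def D0_def)
  have mlt: "m j D0 = w j" if "1 \<le> j" "j < k" for j
  proof -
    have "ws (j+1) \<le> ws k" using mono[of "j+1" k] that k1 by simp
    then show ?thesis using wsS[OF that(1)] wsk w[of j] that k1 unfolding m_def
      by (auto simp: max_def min_def)
  qed
  have mgt: "m j D0 = 0" if "k < j" "j \<le> nH" for j
  proof -
    have "ws (k+1) \<le> ws j" using mono[of "k+1" j] that by simp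
    then show ?thesis using above that unfolding m_def by (auto simp: max_def min_def)
  qed
  have mk: "m k D0 = D0 - ws k" if "k \<le> nH"
    using above[OF that] wsk unfolding m_def by (auto simp: max_def min_def)
  have fD0: "hi_exec nH w thH thHf D0 \<ge> CH - CL"
  proof -
    have split: "{1..nH} = {1..<k} \<union> {k..nH}" using k1 by auto
    have s1: "(\<Sum>j\<in>{1..<k}. thH j * m j D0) = (\<Sum>j\<in>{1..<k}. thH j * w j)"
      by (rule sum.cong) (auto simp: mlt)
    have "(\<Sum>j\<in>{1..nH}. thH j * m j D0) = (\<Sum>j\<in>{1..<k}. thH j * m j D0)
          + (\<Sum>j\<in>{k..nH}. thH j * m j D0)"
      unfolding split by (rule sum.union_disjoint) auto
    show ?thesis
    proof (cases "k \<le> nH")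
      case True
      have e: "{k..nH} = insert k {k<..nH}" using True by auto
      have "(\<Sum>j\<in>{k..nH}. thH j * m j D0) = thH k * (D0 - ws k)"
        unfolding e using mgt mk[OF True] by (simp add: sum.neutral)
      moreover have "mf D0 = 0" using mono[of "k+1" "nH+1"] True above[OF True]
        unfolding mf_def by simp
      ultimately show ?thesis using cond1 True s1 \<open>(\<Sum>j\<in>{1..nH}. _) = _\<close>
        unfolding f_def ws_def D0_def by simp
    next
      case False
      then have kk: "k = nH + 1" using k1 by simp
      have "mf D0 = D0 - ws k" unfolding mf_def kk using wsk kk by simp
      then show ?thesis using cond1 kk s1 \<open>(\<Sum>j\<in>{1..nH}. _) = _\<close>
        unfolding f_def ws_def D0_def by simp
    qed
  qed
  define d where "d = (\<lambda>j. m j D - m j D0)"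
  define df where "df = mf D - mf D0"
  have dnn: "0 \<le> d j" for j unfolding d_def m_def using DD0 by (auto simp: max_def min_def)
  have dfnn: "0 \<le> df" unfolding df_def mf_def using DD0 by (auto simp: max_def min_def)
  have dlt: "d j = 0" if "1 \<le> j" "j < k" for j
  proof -
    have "ws (j+1) \<le> ws k" using mono[of "j+1" k] that k1 by simp
    then show ?thesis using wsk DD0 unfolding d_def m_def by (auto simp: max_def min_def)
  qed
  have part: "\<And>t. 0 \<le> t \<Longrightarrow> (\<Sum>j\<in>{1..nH}. m j t) + mf t = t"
  proof -
    fix t :: real assume "0 \<le> t"
    then have "(\<Sum>j\<in>{1..nH}. m j t) = min t (ws (nH+1))"
      unfolding m_def ws_def using partition_sum[of nH w nH t] w \<open>0 \<le> t\<close> by simp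
    then show "(\<Sum>j\<in>{1..nH}. m j t) + mf t = t" unfolding mf_def by (simp add: max_def min_def)
  qed
  have sumd: "(\<Sum>j\<in>{1..nH}. d j) + df = D - D0"
    using part[of D] part[of D0] D0pos DD0 unfolding d_def df_def
    by (simp add: sum_subtractf)
  have inc: "hi_exec nH w thH thHf D - hi_exec nH w thH thHf D0
        = (\<Sum>j\<in>{1..nH}. thH j * d j) + thHf * df"
    unfolding f_def d_def df_def by (simp add: sum_subtractf right_diff_distrib)
  have "(\<Sum>j\<in>{1..nH}. thL * d j) \<le> (\<Sum>j\<in>{1..nH}. thH j * d j)"
  proof (rule sum_mono)
    fix j assume j: "j \<in> {1..nH}"
    show "thL * d j \<le> thH j * d j"
    proof (cases "j < k")
      case True then show ?thesis using dlt j by simp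
    next
      case False then show ?thesis using cond2[of j] j dnn[of j] by (simp add: mult_right_mono)
    qed
  qed
  moreover have "thL * df \<le> thHf * df" using cond3 dfnn by (simp add: mult_right_mono)
  ultimately have "thL * (D - D0) \<le> hi_exec nH w thH thHf D - hi_exec nH w thH thHf D0"
    unfolding inc sumd[symmetric] by (simp add: distrib_left sum_distrib_left)
  then show ?thesis using gap fD0 unfolding D_def by linarith
qed

end
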